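(* Let $d\ge1$, $A,B\in\mathbb R^{d\times d}$ with $BB^*$ invertible, and define for $u,v\in[0,1]$ $$C_0(u,v)=e^{uA}\Bigl(\int_0^{u\wedge v}e^{-rA}BB^*e^{-rA^*}\,dr\Bigr)e^{vA^*}.$$ Let $L$ be the differential operator $L=(\partial_u+A^* )(BB^* )^{-1}(\partial_u-A)$ acting on $\mathbb R^d$-valued functions of $u$, and let $\mathcal L$ denote $L$ with domain $\mathcal D(\mathcal L)=\{f\in H^2([0,1],\mathbb R^d): f(0)=0,\ f'(1)=Af(1)\}$. Then $C_0$ is the Green's function of $-\mathcal L$, that is, for each $v\in(0,1)$, $$L C_0(u,v)=-\delta(u-v)I$$ (as a distribution in $u$), and $$C_0(0,v)=0,\qquad \partial_uC_0(1,v)=A\,C_0(1,v)\qquad\text{for all }v\in(0,1).$$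
   Context: $C_0$ is the covariance function of the solution of the SDE $dX=AX\,du+B\,dW$ on $[0,1]$ with $X(0)=0$, where $W$ is a standard $d$-dimensional Brownian motion. $\delta$ denotes the Dirac delta and $I$ the $d\times d$ identity matrix. *)

theory Defs
  imports "HOL-Analysis.Analysis"
begin

primrec matpow :: "real^'n^'n \<Rightarrow> nat \<Rightarrow> real^'n^'n" where
  "matpow M 0 = mat 1"
| "matpow M (Suc k) = M ** matpow M k"

definition mexp :: "real^'n^'n \<Rightarrow> real^'n^'n" where
  "mexp M = (\<Sum>k. scaleR (1 / fact k) (matpow M k))"

definition C0 :: "real^'n^'n \<Rightarrow> real^'n^'n \<Rightarrow> real \<Rightarrow> real \<Rightarrow> real^'n^'n" where
  "C0 A B u v =
     mexp (scaleR u A) **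
     integral {0..min u v}
       (\<lambda>r. mexp (-(scaleR r A)) ** (B ** transpose B) ** mexp (-(scaleR r (transpose A))))
     ** mexp (scaleR v (transpose A))"

definition test_fun :: "(real \<Rightarrow> real) \<Rightarrow> bool" where
  "test_fun \<phi> \<longleftrightarrow>
     (\<forall>k. (\<lambda>x. (deriv ^^ k) \<phi> x) differentiable_on UNIV) \<and>
     (\<exists>a b. 0 < a \<and> a \<le> b \<and> b < 1 \<and> (\<forall>x. x \<notin> {a..b} \<longrightarrow> \<phi> x = 0))"

end

theory Submission imports Defs begin


typedef 'n sqm = "UNIV :: (real^'n^'n) set" morphisms mat_of sqm_of by auto
setup_lifting type_definition_sqm

lemma mat_scaleR_mult_left: "(r *\<^sub>R (A::real^'n^'n)) ** B = r *\<^sub>R (A ** B)"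
  by (simp add: vec_eq_iff matrix_matrix_mult_def sum_distrib_left algebra_simps)
lemma mat_scaleR_mult_right: "(A::real^'n^'n) ** (r *\<^sub>R B) = r *\<^sub>R (A ** B)"
  by (simp add: vec_eq_iff matrix_matrix_mult_def sum_distrib_left algebra_simps)
lemma matrix_add_rdistrib': "((A::real^'n^'m) + B) ** C = A ** C + B ** C"
  by (simp add: vec_eq_iff matrix_matrix_mult_def sum.distrib algebra_simps)
lemma mat_one_neq_zero: "(mat 1 :: real^'n^'n) \<noteq> 0"
proof
  assume "(mat 1 :: real^'n^'n) = 0"
  moreover have "(mat 1 :: real^'n^'n) $ undefined $ undefined = 1" by (simp add: mat_def)
  ultimately show False by simp
qed
lemma mat_eq_zero_iff: "(\<forall>x. (A::real^'n^'m) *v x = 0) \<longleftrightarrow> A = 0"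
  by (simp add: matrix_eq)

instantiation sqm :: (finite) real_normed_algebra_1
begin
lift_definition zero_sqm :: "'a sqm" is 0 .
lift_definition one_sqm :: "'a sqm" is "mat 1" .
lift_definition plus_sqm :: "'a sqm \<Rightarrow> 'a sqm \<Rightarrow> 'a sqm" is "(+)" .
lift_definition minus_sqm :: "'a sqm \<Rightarrow> 'a sqm \<Rightarrow> 'a sqm" is "(-)" .
lift_definition uminus_sqm :: "'a sqm \<Rightarrow> 'a sqm" is "uminus" .
lift_definition times_sqm :: "'a sqm \<Rightarrow> 'a sqm \<Rightarrow> 'a sqm" is "(**)" .
lift_definition scaleR_sqm :: "real \<Rightarrow> 'a sqm \<Rightarrow> 'a sqm" is "scaleR" .
lift_definition norm_sqm :: "'a sqm \<Rightarrow> real" is "\<lambda>A. onorm ((*v) A)" .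
definition dist_sqm :: "'a sqm \<Rightarrow> 'a sqm \<Rightarrow> real" where "dist_sqm a b = norm (a - b)"
definition sgn_sqm :: "'a sqm \<Rightarrow> 'a sqm" where "sgn_sqm x = scaleR (inverse (norm x)) x"
definition uniformity_sqm :: "('a sqm \<times> 'a sqm) filter" where
  "uniformity_sqm = (INF e\<in>{0 <..}. principal {(x, y). dist x y < e})"
definition open_sqm :: "'a sqm set \<Rightarrow> bool" where
  "open_sqm S = (\<forall>x\<in>S. \<forall>\<^sub>F (x', y) in uniformity. x' = x \<longrightarrow> y \<in> S)"
instance
proof
  fix a b c :: "'a sqm" and r s :: real
  show "a + b + c = a + (b + c)" by transfer (simp add: algebra_simps)
  show "a + b = b + a" by transfer (simp add: algebra_simps)
  show "0 + a = a" by transfer simp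
  show "- a + a = 0" by transfer simp
  show "a - b = a + - b" by transfer simp
  show "r *\<^sub>R (a + b) = r *\<^sub>R a + r *\<^sub>R b" by transfer (simp add: algebra_simps)
  show "(r + s) *\<^sub>R a = r *\<^sub>R a + s *\<^sub>R a" by transfer (simp add: algebra_simps)
  show "r *\<^sub>R s *\<^sub>R a = (r * s) *\<^sub>R a" by transfer simp
  show "1 *\<^sub>R a = a" by transfer simp
  show "a * b * c = a * (b * c)" by transfer (simp add: matrix_mul_assoc)
  show "(a + b) * c = a * c + b * c" by transfer (simp add: matrix_add_rdistrib')
  show "a * (b + c) = a * b + a * c" by transfer (simp add: matrix_add_ldistrib)
  show "1 * a = a" by transfer simp
  show "a * 1 = a" by transfer simp
  show "(0::'a sqm) \<noteq> 1" by transfer (metis mat_one_neq_zero)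
  show "r *\<^sub>R a * b = r *\<^sub>R (a * b)" by transfer (simp add: mat_scaleR_mult_left)
  show "a * r *\<^sub>R b = r *\<^sub>R (a * b)" by transfer (simp add: mat_scaleR_mult_right)
  show "dist a b = norm (a - b)" by (simp add: dist_sqm_def)
  show "sgn a = inverse (norm a) *\<^sub>R a" by (simp add: sgn_sqm_def)
  show "uniformity = (INF e\<in>{0<..}. principal {(x, y). dist (x::'a sqm) y < e})"
    by (simp add: uniformity_sqm_def)
  show "open U = (\<forall>x\<in>U. \<forall>\<^sub>F (x', y) in uniformity. x' = x \<longrightarrow> y \<in> U)" for U :: "'a sqm set"
    by (simp add: open_sqm_def)
  show "(norm a = 0) = (a = 0)"
    by transfer (simp add: onorm_eq_0 matrix_vector_mul_bounded_linear mat_eq_zero_iff)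
  show "norm (a + b) \<le> norm a + norm b"
  proof transfer
    fix a b :: "real^'a^'a"
    have "(*v) (a+b) = (\<lambda>x. a *v x + b *v x)"
      by (simp add: fun_eq_iff vec_eq_iff matrix_vector_mult_def sum.distrib algebra_simps)
    then show "onorm ((*v) (a + b)) \<le> onorm ((*v) a) + onorm ((*v) b)"
      using onorm_triangle[OF matrix_vector_mul_bounded_linear matrix_vector_mul_bounded_linear] by simp
  qed
  show "norm (r *\<^sub>R a) = \<bar>r\<bar> * norm a"
  proof transfer
    fix a :: "real^'a^'a" and r :: real
    have "(*v) (r *\<^sub>R a) = (\<lambda>x. r *\<^sub>R (a *v x))"
      by (simp add: fun_eq_iff vec_eq_iff matrix_vector_mult_def sum_distrib_left algebra_simps)
    then show "onorm ((*v) (r *\<^sub>R a)) = \<bar>r\<bar> * onorm ((*v) a)"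
      using onorm_scaleR[OF matrix_vector_mul_bounded_linear] by simp
  qed
  show "norm (1::'a sqm) = 1"
  proof transfer
    have "(*v) (mat 1 :: real^'a^'a) = (\<lambda>x. x)" by (simp add: fun_eq_iff)
    then show "onorm ((*v) (mat 1 :: real^'a^'a)) = 1" by (simp only:) (rule onorm_id)
  qed
  show "norm (a * b) \<le> norm a * norm b"
  proof transfer
    fix a b :: "real^'a^'a"
    have "onorm ((*v) a o (*v) b) \<le> onorm ((*v) a) * onorm ((*v) b)"
      by (rule onorm_compose) (rule matrix_vector_mul_bounded_linear)+
    moreover have "(*v) a o (*v) b = (*v) (a ** b)"
      by (rule ext) (simp only: o_def matrix_vector_mul_assoc)
    ultimately show "onorm ((*v) (a ** b)) \<le> onorm ((*v) a) * onorm ((*v) b)"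
      by (simp only:)
  qed
qed
end


lemma norm_mat_le_onorm: "norm (M::real^'n^'n) \<le> (real CARD('n) * real CARD('n)) * onorm ((*v) M)"
proof -
  have "norm M \<le> (\<Sum>i\<in>UNIV. norm (M $ i))"
    by (simp add: norm_vec_def L2_set_le_sum)
  also have "\<dots> \<le> (\<Sum>i\<in>(UNIV::'n set). \<Sum>j\<in>(UNIV::'n set). onorm ((*v) M))"
  proof (rule sum_mono)
    fix i
    have "norm (M $ i) \<le> (\<Sum>j\<in>UNIV. \<bar>M $ i $ j\<bar>)" by (rule norm_le_l1_cart)
    also have "\<dots> \<le> (\<Sum>j\<in>(UNIV::'n set). onorm ((*v) M))"
      by (rule sum_mono) (rule matrix_component_le_onorm)
    finally show "norm (M $ i) \<le> (\<Sum>j\<in>(UNIV::'n set). onorm ((*v) M))" .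
  qed
  also have "\<dots> = (real CARD('n) * real CARD('n)) * onorm ((*v) M)" by simp
  finally show ?thesis .
qed

lemma onorm_le_norm_mat: "onorm ((*v) (M::real^'n^'n)) \<le> (real CARD('n) * real CARD('n)) * norm M"
proof -
  have "onorm ((*v) M) \<le> (\<Sum>i\<in>UNIV. \<Sum>j\<in>UNIV. \<bar>M $ i $ j\<bar>)"
    by (rule onorm_le_matrix_component_sum)
  also have "\<dots> \<le> (\<Sum>i\<in>(UNIV::'n set). \<Sum>j\<in>(UNIV::'n set). norm M)"
  proof (intro sum_mono)
    fix i j
    have "\<bar>M $ i $ j\<bar> \<le> norm (M $ i)" by (rule component_le_norm_cart)
    also have "\<dots> \<le> norm M" by (rule Finite_Cartesian_Product.norm_nth_le)
    finally show "\<bar>M $ i $ j\<bar> \<le> norm M" .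
  qed
  also have "\<dots> = (real CARD('n) * real CARD('n)) * norm M" by simp
  finally show ?thesis .
qed

lemma bounded_linear_mat_of: "bounded_linear (mat_of :: 'n::finite sqm \<Rightarrow> real^'n^'n)"
proof (rule bounded_linear_intro[where K="real CARD('n) * real CARD('n)"])
  fix x y :: "'n sqm" and r :: real
  show "mat_of (x + y) = mat_of x + mat_of y" by (simp add: plus_sqm.rep_eq)
  show "mat_of (r *\<^sub>R x) = r *\<^sub>R mat_of x" by (simp add: scaleR_sqm.rep_eq)
  show "norm (mat_of x) \<le> norm x * (real CARD('n) * real CARD('n))"
    using norm_mat_le_onorm[of "mat_of x"] by (simp add: norm_sqm.rep_eq mult.commute)
qed

lemma bounded_linear_sqm_of: "bounded_linear (sqm_of :: real^'n^'n \<Rightarrow> 'n::finite sqm)"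
proof (rule bounded_linear_intro[where K="real CARD('n) * real CARD('n)"])
  fix x y :: "real^'n^'n" and r :: real
  show "sqm_of (x + y) = sqm_of x + sqm_of y" by (simp add: plus_sqm.abs_eq)
  show "sqm_of (r *\<^sub>R x) = r *\<^sub>R sqm_of x" by (simp add: scaleR_sqm.abs_eq)
  show "norm (sqm_of x) \<le> norm x * (real CARD('n) * real CARD('n))"
    using onorm_le_norm_mat[of x] by (simp add: norm_sqm.abs_eq mult.commute)
qed

instance sqm :: (finite) banach
proof
  fix X :: "nat \<Rightarrow> 'a sqm"
  assume "Cauchy X"
  then have "Cauchy (\<lambda>n. mat_of (X n))" by (rule bounded_linear.Cauchy[OF bounded_linear_mat_of])
  then obtain L where "(\<lambda>n. mat_of (X n)) \<longlonglongrightarrow> L" by (blast dest: Cauchy_convergent convergentD)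
  then have "(\<lambda>n. sqm_of (mat_of (X n))) \<longlonglongrightarrow> sqm_of L"
    by (rule bounded_linear.tendsto[OF bounded_linear_sqm_of])
  then show "convergent X" by (auto simp: mat_of_inverse convergent_def)
qed

lemma mat_of_power: "mat_of (X ^ k) = matpow (mat_of X) k"
  by (induction k) (simp_all add: times_sqm.rep_eq one_sqm.rep_eq)

lemma mexp_eq: "mexp M = mat_of (exp (sqm_of M))"
proof -
  have "mat_of (exp (sqm_of M)) = mat_of (\<Sum>n. sqm_of M ^ n /\<^sub>R fact n)"
    by (simp add: exp_def)
  also have "\<dots> = (\<Sum>n. mat_of (sqm_of M ^ n /\<^sub>R fact n))"
    by (rule bounded_linear.suminf[OF bounded_linear_mat_of summable_exp_generic])
  also have "\<dots> = mexp M"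
    by (simp add: mexp_def mat_of_power scaleR_sqm.rep_eq sqm_of_inverse divide_inverse)
  finally show ?thesis by simp
qed

lemma mexp_scaleR: "mexp (t *\<^sub>R M) = mat_of (exp (t *\<^sub>R sqm_of M))"
  by (simp add: mexp_eq scaleR_sqm.abs_eq)

lemma mexp_has_vector_derivative:
  "((\<lambda>t. mexp (t *\<^sub>R X)) has_vector_derivative X ** mexp (t *\<^sub>R X)) (at t within S)"
proof -
  have d: "((\<lambda>t. exp (t *\<^sub>R sqm_of X)) has_derivative (\<lambda>h. h *\<^sub>R (sqm_of X * exp (t *\<^sub>R sqm_of X)))) (at t within S)"
    using exp_scaleR_has_vector_derivative_left[of "sqm_of X" t]
    by (auto simp: has_vector_derivative_def intro: has_derivative_at_withinI)
  have "((\<lambda>t. mat_of (exp (t *\<^sub>R sqm_of X))) has_derivative (\<lambda>h. mat_of (h *\<^sub>R (sqm_of X * exp (t *\<^sub>R sqm_of X))))) (at t within S)"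
    by (rule bounded_linear.has_derivative[OF bounded_linear_mat_of d])
  then show ?thesis
    by (simp add: has_vector_derivative_def mexp_scaleR scaleR_sqm.rep_eq times_sqm.rep_eq sqm_of_inverse)
qed

lemma mexp_inv1: "mexp (t *\<^sub>R X) ** mexp (-(t *\<^sub>R X)) = mat 1"
proof -
  have "mexp (-(t *\<^sub>R X)) = mat_of (exp (- (t *\<^sub>R sqm_of X)))"
    by (simp add: mexp_eq uminus_sqm.abs_eq scaleR_sqm.abs_eq)
  then show ?thesis
    by (simp add: mexp_scaleR times_sqm.rep_eq[symmetric] exp_minus_inverse one_sqm.rep_eq)
qed

lemma mexp_inv2: "mexp (-(t *\<^sub>R X)) ** mexp (t *\<^sub>R X) = mat 1"
proof -
  have "mexp (-(t *\<^sub>R X)) = mat_of (exp (- (t *\<^sub>R sqm_of X)))"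
    by (simp add: mexp_eq uminus_sqm.abs_eq scaleR_sqm.abs_eq)
  then show ?thesis
    by (simp add: mexp_scaleR times_sqm.rep_eq[symmetric] exp_minus_inverse one_sqm.rep_eq exp_minus_inverse[of "- (t *\<^sub>R sqm_of X)", simplified])
qed



lemma mm_diff_left: "((X::real^'n^'n) - Y) ** Z = X ** Z - Y ** Z"
  by (simp add: vec_eq_iff matrix_matrix_mult_def sum_subtractf algebra_simps)
lemma mm_diff_right: "(X::real^'n^'n) ** (Y - Z) = X ** Y - X ** Z"
  by (simp add: vec_eq_iff matrix_matrix_mult_def sum_subtractf algebra_simps)
lemma mm_neg_left: "(-(X::real^'n^'n)) ** Y = -(X ** Y)"
  by (simp add: vec_eq_iff matrix_matrix_mult_def sum_negf)
lemma mm_neg_right: "(X::real^'n^'n) ** (-Y) = -(X ** Y)"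
  by (simp add: vec_eq_iff matrix_matrix_mult_def sum_negf)

lemma bb_mm: "bounded_bilinear (\<lambda>(X::real^'n^'n) (Y::real^'n^'n). X ** Y)"
  by (simp add: bilinear_conv_bounded_bilinear[symmetric] bilinear_def linear_iff
      matrix_add_ldistrib matrix_add_rdistrib' mat_scaleR_mult_left mat_scaleR_mult_right)

lemma bl_left: "bounded_linear (\<lambda>Y::real^'n^'n. (X::real^'n^'n) ** Y)"
  using bounded_bilinear.bounded_linear_right[OF bb_mm, of X] by simp
lemma bl_right: "bounded_linear (\<lambda>Y::real^'n^'n. Y ** (X::real^'n^'n))"
  using bounded_bilinear.bounded_linear_left[OF bb_mm, of X] by simp

lemma mm_deriv:
  fixes f g :: "real \<Rightarrow> real^'n^'n"
  assumes "(f has_vector_derivative f') (at x within s)" "(g has_vector_derivative g') (at x within s)"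
  shows "((\<lambda>x. f x ** g x) has_vector_derivative (f x ** g' + f' ** g x)) (at x within s)"
  by (rule bounded_bilinear.has_vector_derivative[OF bb_mm assms])

lemma mm_deriv_const_right:
  fixes f :: "real \<Rightarrow> real^'n^'n"
  assumes "(f has_vector_derivative f') F"
  shows "((\<lambda>x. f x ** (X::real^'n^'n)) has_vector_derivative (f' ** X)) F"
  using bounded_linear.has_vector_derivative[OF bl_right assms, of X] by simp

lemma mm_deriv_const_left:
  fixes f :: "real \<Rightarrow> real^'n^'n"
  assumes "(f has_vector_derivative f') F"
  shows "((\<lambda>x. (X::real^'n^'n) ** f x) has_vector_derivative (X ** f')) F"
  using bounded_linear.has_vector_derivative[OF bl_left assms, of X] by simp

lemma mexp_cont: "continuous_on S (\<lambda>t. mexp (t *\<^sub>R X))"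
  using mexp_has_vector_derivative has_vector_derivative_continuous
  by (metis continuous_on_eq_continuous_within)

lemma mexp_neg_deriv:
  "((\<lambda>t. mexp (-(t *\<^sub>R X))) has_vector_derivative (-X) ** mexp (-(t *\<^sub>R X))) (at t within S)"
  using mexp_has_vector_derivative[of "-X" t S] by simp

lemma mexp_neg_cont: "continuous_on S (\<lambda>t. mexp (-(t *\<^sub>R X)))"
  using mexp_cont[of S "-X"] by simp

lemma mm_cont:
  fixes f g :: "real \<Rightarrow> real^'n^'n"
  assumes "continuous_on S f" "continuous_on S g"
  shows "continuous_on S (\<lambda>x. f x ** g x)"
  by (rule bounded_bilinear.continuous_on[OF bb_mm assms])

lemma matrix_inv_left': "invertible (X::real^'n^'n) \<Longrightarrow> matrix_inv X ** X = mat 1"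
  unfolding invertible_def matrix_inv_def by (rule someI2_ex) auto



theorem lemma3:
  fixes A B :: "real^'d^'d"
  assumes "invertible (B ** transpose B)"
  defines "M \<equiv> matrix_inv (B ** transpose B)"
  shows "\<forall>v\<in>{0<..<1}.
      (\<forall>\<phi>. test_fun \<phi> \<longrightarrow>
         M ** integral {0..1} (\<lambda>u. scaleR (deriv (deriv \<phi>) u) (C0 A B u v))
         + (M ** A - transpose A ** M) ** integral {0..1} (\<lambda>u. scaleR (deriv \<phi> u) (C0 A B u v))
         - (transpose A ** M ** A) ** integral {0..1} (\<lambda>u. scaleR (\<phi> u) (C0 A B u v))
         = - scaleR (\<phi> v) (mat 1))
    \<and> C0 A B 0 v = 0
    \<and> ((\<lambda>u. C0 A B u v) has_vector_derivative (A ** C0 A B 1 v)) (at 1 within {0..1})"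
proof (intro ballI)
  fix v :: real assume "v \<in> {0<..<1}"
  hence v0: "0 < v" and v1: "v < 1" by auto
  define BB where "BB = B ** transpose B"
  define K where "K = mexp (v *\<^sub>R transpose A)"
  define F where "F = (\<lambda>r. mexp (-(r *\<^sub>R A)) ** BB ** mexp (-(r *\<^sub>R transpose A)))"
  define C where "C = (\<lambda>u. C0 A B u v)"
  define G where "G = (\<lambda>u. mexp (-(u *\<^sub>R transpose A)) ** K)"
  define P where "P = integral {0..v} F ** K"
  define E where "E = (\<lambda>u. mexp (u *\<^sub>R A))"
  have MBB: "M ** BB = mat 1"
    unfolding M_def BB_def by (rule matrix_inv_left'[OF assms(1)])
  have MBB': "X ** M ** BB = X" for X
    by (simp add: matrix_mul_assoc[symmetric] MBB)
  have Fcont: "continuous_on S F" for S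
    unfolding F_def by (intro mm_cont mexp_neg_cont continuous_on_const)
  have C_lo: "C u = E u ** integral {0..u} F ** K" if "u \<le> v" for u
    using that by (simp add: C_def C0_def E_def F_def BB_def K_def min_def)
  have C_hi: "C u = E u ** P" if "v \<le> u" for u
    using that by (simp add: C_def C0_def E_def F_def BB_def K_def P_def min_def matrix_mul_assoc)
  have dE: "(E has_vector_derivative A ** E u) (at u within S)" for u S
    unfolding E_def by (rule mexp_has_vector_derivative)
  have EF: "E u ** F u = BB ** mexp (-(u *\<^sub>R transpose A))" for u
  proof -
    have "E u ** F u = (E u ** mexp (-(u *\<^sub>R A))) ** BB ** mexp (-(u *\<^sub>R transpose A))"
      by (simp add: F_def matrix_mul_assoc)
    also have "\<dots> = BB ** mexp (-(u *\<^sub>R transpose A))"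
      by (simp add: E_def mexp_inv1)
    finally show ?thesis .
  qed
  have dC_lo: "(C has_vector_derivative (A ** C u + BB ** G u)) (at u within {0..v})"
    if u: "u \<in> {0..v}" for u
  proof -
    have dI: "((\<lambda>u. integral {0..u} F) has_vector_derivative F u) (at u within {0..v})"
      by (rule integral_has_vector_derivative[OF Fcont u])
    have "((\<lambda>u. E u ** integral {0..u} F ** K) has_vector_derivative
            (E u ** F u + (A ** E u) ** integral {0..u} F) ** K) (at u within {0..v})"
      by (intro mm_deriv_const_right mm_deriv dE dI)
    moreover have "(E u ** F u + (A ** E u) ** integral {0..u} F) ** K = A ** C u + BB ** G u"
      using u by (simp add: EF C_lo G_def matrix_add_rdistrib' matrix_mul_assoc)
    ultimately have "((\<lambda>u. E u ** integral {0..u} F ** K) has_vector_derivative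
            (A ** C u + BB ** G u)) (at u within {0..v})" by simp
    then show ?thesis
      by (rule has_vector_derivative_transform[OF u, rotated]) (auto simp: C_lo)
  qed
  have dC_hi: "(C has_vector_derivative (A ** C u)) (at u within {v..1})"
    if u: "u \<in> {v..1}" for u
  proof -
    have "((\<lambda>u. E u ** P) has_vector_derivative (A ** E u) ** P) (at u within {v..1})"
      by (intro mm_deriv_const_right dE)
    then have "((\<lambda>u. E u ** P) has_vector_derivative (A ** C u)) (at u within {v..1})"
      using u by (simp add: C_hi matrix_mul_assoc)
    then show ?thesis
      by (rule has_vector_derivative_transform[OF u, rotated]) (auto simp: C_hi)
  qed
  have dG: "(G has_vector_derivative (- transpose A ** G u)) (at u within S)" for u S
    unfolding G_def using mexp_neg_deriv
    by (auto simp: matrix_mul_assoc intro!: mm_deriv_const_right)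
  have Gv: "G v = mat 1"
    by (simp add: G_def K_def mexp_inv2)
  show "(\<forall>\<phi>. test_fun \<phi> \<longrightarrow>
         M ** integral {0..1} (\<lambda>u. scaleR (deriv (deriv \<phi>) u) (C0 A B u v))
         + (M ** A - transpose A ** M) ** integral {0..1} (\<lambda>u. scaleR (deriv \<phi> u) (C0 A B u v))
         - (transpose A ** M ** A) ** integral {0..1} (\<lambda>u. scaleR (\<phi> u) (C0 A B u v))
         = - scaleR (\<phi> v) (mat 1))
    \<and> C0 A B 0 v = 0
    \<and> ((\<lambda>u. C0 A B u v) has_vector_derivative (A ** C0 A B 1 v)) (at 1 within {0..1})"
  proof (intro conjI allI impI)
    show "C0 A B 0 v = 0"
      using v0 by (simp add: C0_def)
    show "((\<lambda>u. C0 A B u v) has_vector_derivative (A ** C0 A B 1 v)) (at 1 within {0..1})"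
    proof -
      have "((\<lambda>u. E u ** P) has_vector_derivative (A ** E 1) ** P) (at 1 within {0..1})"
        by (intro mm_deriv_const_right dE)
      then have "((\<lambda>u. E u ** P) has_vector_derivative A ** C 1) (at 1 within {0..1})"
        using v1 by (simp add: C_hi matrix_mul_assoc)
      moreover have "(\<lambda>u. C0 A B u v) = C" "C0 A B 1 v = C 1" by (simp_all add: C_def)
      ultimately show ?thesis
        apply (simp only:)
      proof (rule has_vector_derivative_transform_within[where d="1 - v"])
        show "0 < 1 - v" using v1 by simp
        show "(1::real) \<in> {0..1}" by simp
        fix x' :: real assume "x' \<in> {0..1}" "dist x' 1 < 1 - v"
        then have "v \<le> x'" by (auto simp: dist_real_def)
        then show "E x' ** P = C x'" by (simp add: C_hi)
      qed
    qed
    fix \<phi> :: "real \<Rightarrow> real"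
    assume tf: "test_fun \<phi>"
    show "M ** integral {0..1} (\<lambda>u. scaleR (deriv (deriv \<phi>) u) (C0 A B u v))
         + (M ** A - transpose A ** M) ** integral {0..1} (\<lambda>u. scaleR (deriv \<phi> u) (C0 A B u v))
         - (transpose A ** M ** A) ** integral {0..1} (\<lambda>u. scaleR (\<phi> u) (C0 A B u v))
         = - scaleR (\<phi> v) (mat 1)"
    proof -
    obtain a b where ab: "0 < a" "a \<le> b" "b < 1" and supp: "\<And>x. x \<notin> {a..b} \<Longrightarrow> \<phi> x = 0"
        using tf unfolding test_fun_def by blast
      have dk: "(deriv ^^ k) \<phi> differentiable at x" for k x
        using tf unfolding test_fun_def differentiable_on_def by auto
      define \<phi>1 where "\<phi>1 = deriv \<phi>"
      define \<phi>2 where "\<phi>2 = deriv \<phi>1"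
      have dphi: "(\<phi> has_real_derivative \<phi>1 x) (at x within S)" for x S
        using dk[of 0 x] unfolding \<phi>1_def
        by (simp add: DERIV_deriv_iff_real_differentiable[symmetric] has_field_derivative_at_within)
      have dphi1: "(\<phi>1 has_real_derivative \<phi>2 x) (at x within S)" for x S
        using dk[of 1 x] unfolding \<phi>2_def \<phi>1_def
        by (simp add: DERIV_deriv_iff_real_differentiable[symmetric] has_field_derivative_at_within)
      have cphi2: "continuous_on S \<phi>2" for S
      proof -
        have "(deriv ^^ 2) \<phi> differentiable_on S"
          using dk[of 2] unfolding differentiable_on_def by (auto intro: differentiable_at_withinI)
        moreover have "\<phi>2 = (deriv ^^ 2) \<phi>" by (simp add: \<phi>2_def \<phi>1_def numeral_2_eq_2)
        ultimately show ?thesis using differentiable_imp_continuous_on by metis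
      qed
      have cphi1: "continuous_on S \<phi>1" for S
        using dphi1 by (meson DERIV_continuous continuous_at_imp_continuous_on)
      have cphi: "continuous_on S \<phi>" for S
        using dphi by (meson DERIV_continuous continuous_at_imp_continuous_on)
      have phi0: "\<phi> 0 = 0" and phi1: "\<phi> 1 = 0" using ab supp by auto
      have phi1_0: "\<phi>1 0 = 0"
      proof -
        have "((\<lambda>_. 0) has_real_derivative 0) (at 0)" by simp
        then have "(\<phi> has_real_derivative 0) (at 0)"
          by (rule has_field_derivative_transform_within_open[where S="{..<a}"]) (use ab supp in auto)
        then show ?thesis using dphi[of 0 UNIV] DERIV_unique by blast
      qed
      have phi1_1: "\<phi>1 1 = 0"
      proof -
        have "((\<lambda>_. 0) has_real_derivative 0) (at 1)" by simp
        then have "(\<phi> has_real_derivative 0) (at 1)"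
          by (rule has_field_derivative_transform_within_open[where S="{b<..}"]) (use ab supp in auto)
        then show ?thesis using dphi[of 1 UNIV] DERIV_unique by blast
      qed
      define N1 where "N1 = M ** A - transpose A ** M"
      define N0 where "N0 = transpose A ** M ** A"
      define f where "f = (\<lambda>u. M ** (\<phi>2 u *\<^sub>R C u) + N1 ** (\<phi>1 u *\<^sub>R C u) - N0 ** (\<phi> u *\<^sub>R C u))"
      define \<Phi>1 where "\<Phi>1 = (\<lambda>u. M ** (\<phi>1 u *\<^sub>R C u) - (transpose A ** M) ** (\<phi> u *\<^sub>R C u) - \<phi> u *\<^sub>R G u)"
      define \<Phi>2 where "\<Phi>2 = (\<lambda>u. M ** (\<phi>1 u *\<^sub>R C u) - (transpose A ** M) ** (\<phi> u *\<^sub>R C u))"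
      note simps = matrix_add_ldistrib matrix_add_rdistrib' mm_diff_left mm_diff_right mm_neg_left mm_neg_right
        mat_scaleR_mult_left mat_scaleR_mult_right matrix_mul_assoc MBB MBB'
      have I1: "(f has_integral (\<Phi>1 v - \<Phi>1 0)) {0..v}"
      proof (rule fundamental_theorem_of_calculus)
        show "0 \<le> v" using v0 by simp
        fix x assume x: "x \<in> {0..v}"
        have "(\<Phi>1 has_vector_derivative
            (M ** (\<phi>1 x *\<^sub>R (A ** C x + BB ** G x) + \<phi>2 x *\<^sub>R C x)
             - (transpose A ** M) ** (\<phi> x *\<^sub>R (A ** C x + BB ** G x) + \<phi>1 x *\<^sub>R C x)
             - (\<phi> x *\<^sub>R (- transpose A ** G x) + \<phi>1 x *\<^sub>R G x))) (at x within {0..v})"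
          unfolding \<Phi>1_def
          by (intro derivative_intros mm_deriv_const_left has_vector_derivative_scaleR dphi dphi1 dC_lo[OF x] dG)
        moreover have "(M ** (\<phi>1 x *\<^sub>R (A ** C x + BB ** G x) + \<phi>2 x *\<^sub>R C x)
             - (transpose A ** M) ** (\<phi> x *\<^sub>R (A ** C x + BB ** G x) + \<phi>1 x *\<^sub>R C x)
             - (\<phi> x *\<^sub>R (- transpose A ** G x) + \<phi>1 x *\<^sub>R G x)) = f x"
          unfolding f_def N1_def N0_def by (simp add: simps algebra_simps)
        ultimately show "(\<Phi>1 has_vector_derivative f x) (at x within {0..v})" by simp
      qed
      have I2: "(f has_integral (\<Phi>2 1 - \<Phi>2 v)) {v..1}"
      proof (rule fundamental_theorem_of_calculus)
        show "v \<le> 1" using v1 by simp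
        fix x assume x: "x \<in> {v..1}"
        have "(\<Phi>2 has_vector_derivative
            (M ** (\<phi>1 x *\<^sub>R (A ** C x) + \<phi>2 x *\<^sub>R C x)
             - (transpose A ** M) ** (\<phi> x *\<^sub>R (A ** C x) + \<phi>1 x *\<^sub>R C x))) (at x within {v..1})"
          unfolding \<Phi>2_def
          by (intro derivative_intros mm_deriv_const_left has_vector_derivative_scaleR dphi dphi1 dC_hi[OF x])
        moreover have "(M ** (\<phi>1 x *\<^sub>R (A ** C x) + \<phi>2 x *\<^sub>R C x)
             - (transpose A ** M) ** (\<phi> x *\<^sub>R (A ** C x) + \<phi>1 x *\<^sub>R C x)) = f x"
          unfolding f_def N1_def N0_def by (simp add: simps algebra_simps)
        ultimately show "(\<Phi>2 has_vector_derivative f x) (at x within {v..1})" by simp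
      qed
      have If: "(f has_integral - (\<phi> v *\<^sub>R mat 1)) {0..1}"
      proof -
        have "(f has_integral ((\<Phi>1 v - \<Phi>1 0) + (\<Phi>2 1 - \<Phi>2 v))) {0..1}"
          using v0 v1 by (intro has_integral_combine[OF _ _ I1 I2]) auto
        moreover have "(\<Phi>1 v - \<Phi>1 0) + (\<Phi>2 1 - \<Phi>2 v) = - (\<phi> v *\<^sub>R mat 1)"
          by (simp add: \<Phi>1_def \<Phi>2_def phi0 phi1 phi1_0 phi1_1 Gv)
        ultimately show ?thesis by simp
      qed
      have Ccont_lo: "continuous_on {0..v} C"
        using dC_lo by (meson continuous_on_eq_continuous_within has_vector_derivative_continuous)
      have Ccont_hi: "continuous_on {v..1} C"
        using dC_hi by (meson continuous_on_eq_continuous_within has_vector_derivative_continuous)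
      have integ: "(\<lambda>u. g u *\<^sub>R C u) integrable_on {0..1}" if g: "\<And>S. continuous_on S g" for g
      proof (rule Henstock_Kurzweil_Integration.integrable_combine[of 0 v 1])
        show "0 \<le> v" "v \<le> 1" using v0 v1 by auto
        show "(\<lambda>u. g u *\<^sub>R C u) integrable_on {0..v}"
          by (intro integrable_continuous_interval continuous_on_scaleR g Ccont_lo)
        show "(\<lambda>u. g u *\<^sub>R C u) integrable_on {v..1}"
          by (intro integrable_continuous_interval continuous_on_scaleR g Ccont_hi)
      qed
      have lin: "((\<lambda>u. X ** (g u *\<^sub>R C u)) has_integral X ** integral {0..1} (\<lambda>u. g u *\<^sub>R C u)) {0..1}"
        if g: "\<And>S. continuous_on S g" for g and X :: "real^'d^'d"
        using has_integral_linear[OF integrable_integral[OF integ[OF g]] bl_left[of X]]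
        by (simp add: o_def)
      have "(f has_integral (M ** integral {0..1} (\<lambda>u. \<phi>2 u *\<^sub>R C u)
            + N1 ** integral {0..1} (\<lambda>u. \<phi>1 u *\<^sub>R C u)
            - N0 ** integral {0..1} (\<lambda>u. \<phi> u *\<^sub>R C u))) {0..1}"
        unfolding f_def
        by (intro has_integral_add has_integral_diff lin cphi cphi1 cphi2)
      with If have "M ** integral {0..1} (\<lambda>u. \<phi>2 u *\<^sub>R C u)
            + N1 ** integral {0..1} (\<lambda>u. \<phi>1 u *\<^sub>R C u)
            - N0 ** integral {0..1} (\<lambda>u. \<phi> u *\<^sub>R C u) = - (\<phi> v *\<^sub>R mat 1)"
        using has_integral_unique by blast
      then show "M ** integral {0..1} (\<lambda>u. scaleR (deriv (deriv \<phi>) u) (C0 A B u v))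
           + (M ** A - transpose A ** M) ** integral {0..1} (\<lambda>u. scaleR (deriv \<phi> u) (C0 A B u v))
           - (transpose A ** M ** A) ** integral {0..1} (\<lambda>u. scaleR (\<phi> u) (C0 A B u v))
           = - scaleR (\<phi> v) (mat 1)"
        by (simp add: C_def \<phi>1_def \<phi>2_def N1_def N0_def)
    qed
  qed
qed

end
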